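(* Let $\epsilon\in(\frac12,1)$, $W\in\mathcal{P}(\mathcal{Y}|\mathcal{X})$ with $V_\epsilon(W)>0$, and $a>0$ with $a>\frac{2}{1-\epsilon}$. Let $(f,\varphi)$ be an $(N,R_N)$ constant composition code with $$R_N=C(W)+\sqrt{\frac{V_\epsilon(W)}{N}}\Phi^{-1}(\epsilon)-\frac1N\ln\Big(1-\epsilon-\frac2a\Big)$$ and common composition $Q$ satisfying $V(Q,W)<\frac1aV_\epsilon(W)[\Phi^{-1}(\epsilon)]^2$. Then $\bar{\mathrm{P}}_{\mathrm{e}}(f,\varphi)>\epsilon$.
   Context: $\mathcal{X},\mathcal{Y}$ finite; memoryless channel. An $(N,R)$ constant composition code: encoder $\{1,\dots,\lceil e^{NR}\rceil\}\to\mathcal{X}^N$ all of whose codewords have the same empirical distribution (common composition), decoder $\mathcal{Y}^N\to\mathcal{M}$; $\bar{\mathrm{P}}_{\mathrm{e}}$ is average error over uniform messages. $C(W)$ capacity; $\Phi$ standard Gaussian CDF; $q_P(y)=\sum_xP(x)W(y|x)$; $V(P,W)=\sum_{x,y}P(x)W(y|x)[\ln\frac{W(y|x)}{q_P(y)}-\sum_bW(b|x)\ln\frac{W(b|x)}{q_P(b)}]^2$; for $\epsilon\ge1/2$, $V_\epsilon(W)=\max_{Q:I(Q;W)=C(W)}V(Q,W)$. *)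

theory Defs
  imports "HOL-Probability.Probability"
begin

text \<open>Finite alphabets are modelled by finite types 'x and 'y.
  A channel W is a stochastic matrix, W x y = W(y|x).\<close>

definition is_pd :: "('a::finite \<Rightarrow> real) \<Rightarrow> bool" where
  "is_pd P \<longleftrightarrow> (\<forall>a. 0 \<le> P a) \<and> (\<Sum>a\<in>UNIV. P a) = 1"

definition is_channel :: "('x::finite \<Rightarrow> 'y::finite \<Rightarrow> real) \<Rightarrow> bool" where
  "is_channel W \<longleftrightarrow> (\<forall>x. is_pd (W x))"

definition out_dist :: "('x::finite \<Rightarrow> real) \<Rightarrow> ('x \<Rightarrow> 'y::finite \<Rightarrow> real) \<Rightarrow> 'y \<Rightarrow> real" where
  "out_dist P W y = (\<Sum>x\<in>UNIV. P x * W x y)"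

text \<open>Information density term ln (W(y|x)/q_P(y)) (terms with zero weight vanish
  in every sum below, in line with the convention 0 ln 0 = 0).\<close>
definition info_dens :: "('x::finite \<Rightarrow> real) \<Rightarrow> ('x \<Rightarrow> 'y::finite \<Rightarrow> real) \<Rightarrow> 'x \<Rightarrow> 'y \<Rightarrow> real" where
  "info_dens P W x y = (if W x y = 0 then 0 else ln (W x y / out_dist P W y))"

definition cond_div :: "('x::finite \<Rightarrow> real) \<Rightarrow> ('x \<Rightarrow> 'y::finite \<Rightarrow> real) \<Rightarrow> 'x \<Rightarrow> real" where
  "cond_div P W x = (\<Sum>b\<in>UNIV. W x b * info_dens P W x b)"

definition mutual_info :: "('x::finite \<Rightarrow> real) \<Rightarrow> ('x \<Rightarrow> 'y::finite \<Rightarrow> real) \<Rightarrow> real" where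
  "mutual_info P W = (\<Sum>x\<in>UNIV. \<Sum>y\<in>UNIV. P x * W x y * info_dens P W x y)"

definition capacity :: "('x::finite \<Rightarrow> 'y::finite \<Rightarrow> real) \<Rightarrow> real" where
  "capacity W = Sup {mutual_info P W | P. is_pd P}"

definition disp :: "('x::finite \<Rightarrow> real) \<Rightarrow> ('x \<Rightarrow> 'y::finite \<Rightarrow> real) \<Rightarrow> real" where
  "disp P W = (\<Sum>x\<in>UNIV. \<Sum>y\<in>UNIV. P x * W x y * (info_dens P W x y - cond_div P W x)^2)"

text \<open>V_eps(W) for eps >= 1/2: maximum of V(Q,W) over capacity-achieving Q.\<close>
definition V_eps :: "('x::finite \<Rightarrow> 'y::finite \<Rightarrow> real) \<Rightarrow> real" where
  "V_eps W = Sup {disp Q W | Q. is_pd Q \<and> mutual_info Q W = capacity W}"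

definition Phi :: "real \<Rightarrow> real" where
  "Phi t = measure (density lborel std_normal_density) {..t}"

definition Phi_inv :: "real \<Rightarrow> real" where
  "Phi_inv e = (THE t. Phi t = e)"

definition composition :: "nat \<Rightarrow> 'a list \<Rightarrow> 'a \<Rightarrow> real" where
  "composition N xs a = real (card {i. i < N \<and> xs ! i = a}) / real N"

definition num_msgs :: "nat \<Rightarrow> real \<Rightarrow> nat" where
  "num_msgs N R = nat \<lceil>exp (real N * R)\<rceil>"

definition cc_code :: "nat \<Rightarrow> real \<Rightarrow> (nat \<Rightarrow> 'x list) \<Rightarrow> ('y list \<Rightarrow> nat) \<Rightarrow> ('x \<Rightarrow> real) \<Rightarrow> bool" where
  "cc_code N R f phi Q \<longleftrightarrow>
     (\<forall>m\<in>{1..num_msgs N R}. length (f m) = N \<and> composition N (f m) = Q) \<and>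
     (\<forall>ys. length ys = N \<longrightarrow> phi ys \<in> {1..num_msgs N R})"

definition chan_N :: "('x \<Rightarrow> 'y \<Rightarrow> real) \<Rightarrow> nat \<Rightarrow> 'x list \<Rightarrow> 'y list \<Rightarrow> real" where
  "chan_N W N xs ys = (\<Prod>i<N. W (xs ! i) (ys ! i))"

definition avg_err :: "('x \<Rightarrow> 'y::finite \<Rightarrow> real) \<Rightarrow> nat \<Rightarrow> real \<Rightarrow> (nat \<Rightarrow> 'x list) \<Rightarrow> ('y list \<Rightarrow> nat) \<Rightarrow> real" where
  "avg_err W N R f phi =
     (1 / real (num_msgs N R)) *
     (\<Sum>m\<in>{1..num_msgs N R}. \<Sum>ys\<in>{ys. length ys = N \<and> phi ys \<noteq> m}. chan_N W N (f m) ys)"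

end

theory Submission
  imports Defs
begin

abbreviation "NM \<equiv> density lborel std_normal_density"

lemma NM_rd: "real_distribution NM"
  unfolding real_distribution_def real_distribution_axioms_def
  using prob_space_normal_density by auto

lemma NM_fbm: "finite_borel_measure NM"
  using real_distribution.finite_borel_measure_M[OF NM_rd] .

lemma Phi_cdf: "Phi t = cdf NM t"
  using cdf_def2 by (simp add: Phi_def)

lemma NM_singleton: "measure NM {x} = 0"
proof -
  have "AE z in lborel. z \<in> {x} \<longrightarrow> std_normal_density z = 0"
    using AE_lborel_singleton[of x] by eventually_elim auto
  hence "{x} \<in> null_sets NM"
    by (subst null_sets_density_iff) auto
  thus ?thesis by (simp add: measure_def null_setsD1)  
qed

lemma Phi_cont: "isCont Phi x"
  unfolding Phi_cdf[abs_def] using finite_borel_measure.isCont_cdf[OF NM_fbm] NM_singleton by simp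

lemma Phi_mono: "x \<le> y \<Longrightarrow> Phi x \<le> Phi y"
  unfolding Phi_cdf using finite_borel_measure.cdf_nondecreasing[OF NM_fbm] by simp

lemma Phi_strict: assumes "x < y" shows "Phi x < Phi y"
proof -
  have d: "Phi y - Phi x = measure NM {x<..y}"
    unfolding Phi_cdf using finite_borel_measure.cdf_diff_eq[OF NM_fbm assms] .
  have "{x<..y} \<notin> null_sets NM"
  proof
    assume "{x<..y} \<in> null_sets NM"
    hence "AE z in lborel. z \<in> {x<..y} \<longrightarrow> std_normal_density z = 0"
      by (subst (asm) null_sets_density_iff) auto
    hence "AE z in lborel. z \<notin> {x<..y}"
      by eventually_elim (metis less_irrefl normal_density_pos zero_less_one)
    hence "{x<..y} \<in> null_sets lborel"
      using AE_iff_null_sets[of "{x<..y}" lborel] by simp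
    thus False using assms by (simp add: emeasure_lborel_Ioc null_sets_def)
  qed
  moreover have "{x<..y} \<in> sets NM" by simp
  moreover have "emeasure NM {x<..y} = ennreal (measure NM {x<..y})"
    using finite_measure.emeasure_eq_measure[OF finite_borel_measure.axioms(1)[OF NM_fbm]] .
  ultimately have "measure NM {x<..y} \<noteq> 0" by auto
  hence "measure NM {x<..y} > 0" using measure_nonneg[of NM "{x<..y}"] by linarith
  thus ?thesis using d by simp
qed

lemma NM_sym: "emeasure NM {..0} = emeasure NM {0..}"
proof -
  have "emeasure NM {..0} = (\<integral>\<^sup>+ z. ennreal (std_normal_density z * indicator {..0} z) \<partial>lborel)"
    by (subst emeasure_density) (auto intro!: nn_integral_cong simp: indicator_def)
  also have "\<dots> = (\<integral>\<^sup>+ z. ennreal (std_normal_density z * indicator {..0} z) \<partial>(distr lborel borel uminus))"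
    by (simp add: lborel_distr_uminus)
  also have "\<dots> = (\<integral>\<^sup>+ z. ennreal (std_normal_density (-z) * indicator {..0} (-z)) \<partial>lborel)"
    by (subst nn_integral_distr) auto
  also have "\<dots> = (\<integral>\<^sup>+ z. ennreal (std_normal_density z * indicator {0..} z) \<partial>lborel)"
    by (auto intro!: nn_integral_cong simp: indicator_def std_normal_density_def)
  also have "\<dots> = emeasure NM {0..}"
    by (subst emeasure_density) (auto intro!: nn_integral_cong simp: indicator_def)
  finally show ?thesis .
qed

lemma Phi_0: "Phi 0 = 1/2"
proof -
  interpret real_distribution NM by (rule NM_rd)
  have e: "measure NM {..0} = measure NM {0..}" using NM_sym by (simp add: measure_def)
  have "measure NM {0..} = measure NM ({0<..} \<union> {0})"
    by (metis Un_commute ivl_disj_un_singleton(1))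
  also have "\<dots> = measure NM {0<..}"
    by (rule measure_Un_null_set) (auto simp: null_setsI emeasure_eq_measure NM_singleton)
  finally have e2: "measure NM {0..} = measure NM {0<..}" .
  have "measure NM ({..0} \<union> {0<..}) = measure NM {..0} + measure NM {0<..}"
    by (rule finite_measure_Union) auto
  moreover have "{..0} \<union> {0<..} = (UNIV :: real set)" by auto
  ultimately have "measure NM {..0} + measure NM {0<..} = 1"
    using prob_space by (simp add: space_density)
  thus ?thesis using e e2 by (simp add: Phi_def)
qed

lemma Phi_top: "(Phi \<longlongrightarrow> 1) at_top"
  unfolding Phi_cdf[abs_def] using real_distribution.cdf_lim_at_top_prob[OF NM_rd] by simp

lemma Phi_inv_pos:
  assumes "1/2 < e" "e < 1"
  shows "Phi (Phi_inv e) = e" "Phi_inv e > 0"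
proof -
  obtain T where T: "Phi T > e"
    using order_tendstoD(1)[OF Phi_top assms(2)] by (metis eventually_at_top_linorder order_refl)
  have "T > 0" using T Phi_mono[of T 0] Phi_0 assms by force
  then obtain t where t: "0 \<le> t" "t \<le> T" "Phi t = e"
    using IVT[of Phi 0 e T] Phi_0 T assms Phi_cont by force
  have u: "\<And>s. Phi s = e \<Longrightarrow> s = t"
    by (metis Phi_strict linorder_neqE_linordered_idom order_less_irrefl t(3))
  have "Phi_inv e = t" unfolding Phi_inv_def using t u by blast
  thus "Phi (Phi_inv e) = e" using t by simp
  show "Phi_inv e > 0"
    using \<open>Phi_inv e = t\<close> t Phi_0 assms by (metis less_irrefl le_less)
qed

lemma lists_Suc_sum:
  fixes g :: "'y::finite list \<Rightarrow> real"
  shows "(\<Sum>ys\<in>{ys. length ys = Suc n}. g ys) = (\<Sum>y\<in>UNIV. \<Sum>ys\<in>{ys. length ys = n}. g (y#ys))"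
proof -
  have e: "{ys::'y list. length ys = Suc n} = (\<lambda>(y,ys). y#ys) ` (UNIV \<times> {ys. length ys = n})"
    by (auto simp: image_def length_Suc_conv)
  have i: "inj_on (\<lambda>(y::'y,ys). y#ys) (UNIV \<times> {ys. length ys = n})"
    by (auto simp: inj_on_def)
  have fin: "finite {ys::'y list. length ys = n}"
    using finite_lists_length_eq[of "UNIV::'y set" n] by simp
  show ?thesis
    unfolding e sum.reindex[OF i] sum.cartesian_product by (auto intro!: sum.cong)
qed

lemma fin_lists: "finite {ys::'y::finite list. length ys = n}"
  using finite_lists_length_eq[of "UNIV::'y set" n] by simp

lemma chan_Cons: "chan_N W (Suc n) (x#xs) (y#ys) = W x y * chan_N W n xs ys"
  unfolding chan_N_def prod.lessThan_Suc_shift by simp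

lemma chan_sum1:
  assumes "\<And>x. (\<Sum>y\<in>UNIV. W x y) = 1"
  shows "length xs = n \<Longrightarrow> (\<Sum>ys\<in>{ys::'y::finite list. length ys = n}. chan_N W n xs ys) = 1"
proof (induction xs arbitrary: n)
  case Nil thus ?case by (simp add: chan_N_def)
next
  case (Cons x xs)
  then obtain m where n: "n = Suc m" "length xs = m" by auto
  show ?case unfolding n lists_Suc_sum chan_Cons
    by (simp add: sum_distrib_left[symmetric] Cons.IH[OF n(2)] assms)
qed

lemma chan_mean:
  assumes "\<And>x. (\<Sum>y\<in>UNIV. W x y) = 1"
  shows "length xs = n \<Longrightarrow> (\<Sum>ys\<in>{ys::'y::finite list. length ys = n}. chan_N W n xs ys * (\<Sum>i<n. h (xs!i) (ys!i)))
     = (\<Sum>i<n. \<Sum>y\<in>UNIV. W (xs!i) y * h (xs!i) y)"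
proof (induction xs arbitrary: n)
  case Nil thus ?case by (simp add: chan_N_def)
next
  case (Cons x xs)
  then obtain m where n: "n = Suc m" "length xs = m" by auto
  have "(\<Sum>ys\<in>{ys. length ys = n}. chan_N W n (x#xs) ys * (\<Sum>i<n. h ((x#xs)!i) (ys!i)))
      = (\<Sum>y\<in>UNIV. \<Sum>ys\<in>{ys. length ys = m}. W x y * chan_N W m xs ys * h x y
          + W x y * (chan_N W m xs ys * (\<Sum>i<m. h (xs!i) (ys!i))))"
    unfolding n lists_Suc_sum chan_Cons sum.lessThan_Suc_shift
    by (simp add: algebra_simps)
  also have "\<dots> = (\<Sum>y\<in>UNIV. W x y * h x y + W x y * (\<Sum>i<m. \<Sum>y\<in>UNIV. W (xs!i) y * h (xs!i) y))"
    by (simp add: sum.distrib sum_distrib_left[symmetric] sum_distrib_right[symmetric]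
        Cons.IH[OF n(2)] chan_sum1[OF assms n(2)] mult.assoc)
  also have "\<dots> = (\<Sum>i<n. \<Sum>y\<in>UNIV. W ((x#xs)!i) y * h ((x#xs)!i) y)"
    unfolding n sum.lessThan_Suc_shift by (simp add: sum.distrib sum_distrib_right[symmetric] assms)
  finally show ?case .
qed

lemma chan_var:
  assumes "\<And>x. (\<Sum>y\<in>UNIV. W x y) = 1" and z: "\<And>x. (\<Sum>y\<in>UNIV. W x y * h x y) = 0"
  shows "length xs = n \<Longrightarrow> (\<Sum>ys\<in>{ys::'y::finite list. length ys = n}. chan_N W n xs ys * (\<Sum>i<n. h (xs!i) (ys!i))^2)
     = (\<Sum>i<n. \<Sum>y\<in>UNIV. W (xs!i) y * (h (xs!i) y)^2)"
proof (induction xs arbitrary: n)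
  case Nil thus ?case by (simp add: chan_N_def)
next
  case (Cons x xs)
  then obtain m where n: "n = Suc m" "length xs = m" by auto
  let ?T = "\<lambda>ys. (\<Sum>i<m. h (xs!i) (ys!i))"
  have "(\<Sum>ys\<in>{ys. length ys = n}. chan_N W n (x#xs) ys * (\<Sum>i<n. h ((x#xs)!i) (ys!i))^2)
      = (\<Sum>y\<in>UNIV. \<Sum>ys\<in>{ys. length ys = m}. W x y * (h x y)^2 * chan_N W m xs ys
          + 2 * (W x y * h x y) * (chan_N W m xs ys * ?T ys)
          + W x y * (chan_N W m xs ys * (?T ys)^2))"
    unfolding n lists_Suc_sum chan_Cons sum.lessThan_Suc_shift
    by (simp add: algebra_simps power2_eq_square)
  also have "\<dots> = (\<Sum>y\<in>UNIV. W x y * (h x y)^2 + 2 * (W x y * h x y) * (\<Sum>i<m. \<Sum>y\<in>UNIV. W (xs!i) y * h (xs!i) y)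
       + W x y * (\<Sum>i<m. \<Sum>y\<in>UNIV. W (xs!i) y * (h (xs!i) y)^2))"
    by (simp add: sum.distrib sum_distrib_left[symmetric] sum_distrib_right[symmetric]
        Cons.IH[OF n(2)] chan_sum1[OF assms(1) n(2)] chan_mean[OF assms(1) n(2), where h=h] mult.assoc)
  also have "\<dots> = (\<Sum>y\<in>UNIV. W x y * (h x y)^2) + (\<Sum>i<m. \<Sum>y\<in>UNIV. W (xs!i) y * (h (xs!i) y)^2)"
    by (simp add: z sum.distrib sum_distrib_right[symmetric] assms(1))
  also have "\<dots> = (\<Sum>i<n. \<Sum>y\<in>UNIV. W ((x#xs)!i) y * (h ((x#xs)!i) y)^2)"
    unfolding n sum.lessThan_Suc_shift by simp
  finally show ?case .
qed

lemma sum_fibers_list: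
  fixes g :: "'x::finite \<Rightarrow> real"
  shows "(\<Sum>i<N. g (xs!i)) = (\<Sum>x\<in>UNIV. real (card {i. i < N \<and> xs!i = x}) * g x)"
proof -
  have "(\<Sum>i<N. g (xs!i)) = (\<Sum>i<N. \<Sum>x\<in>UNIV. if xs!i = x then g x else 0)"
    by simp
  also have "\<dots> = (\<Sum>x\<in>UNIV. \<Sum>i<N. if xs!i = x then g x else 0)"
    by (rule sum.swap)
  also have "\<dots> = (\<Sum>x\<in>UNIV. real (card {i. i < N \<and> xs!i = x}) * g x)"
    by (rule sum.cong) (auto simp: sum.If_cases lessThan_def Int_def conj_commute)
  finally show ?thesis .
qed

lemma out_pos:
  assumes "is_channel W" "is_pd P" "P x > 0" "W x y > 0"
  shows "out_dist P W y \<ge> P x * W x y" "out_dist P W y > 0"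
proof -
  have nn: "\<And>x'. 0 \<le> P x' * W x' y" using assms(1,2) unfolding is_channel_def is_pd_def by simp
  show "out_dist P W y \<ge> P x * W x y" unfolding out_dist_def
    by (rule member_le_sum) (use nn in auto)
  thus "out_dist P W y > 0" using assms(3,4) by (smt (verit) mult_pos_pos)
qed

lemma mi_term_le:
  assumes "is_channel W" "is_pd P"
  shows "P x * W x y * info_dens P W x y \<le> 1"
proof (cases "P x = 0 \<or> W x y = 0")
  case True thus ?thesis by (auto simp: info_dens_def)
next
  case False
  have W1: "W x y \<le> 1" and W0: "W x y \<ge> 0" using assms(1) unfolding is_channel_def is_pd_def
    using member_le_sum[of y UNIV "W x"] by auto
  have P0: "P x \<ge> 0" using assms(2) by (simp add: is_pd_def)
  hence Pp: "P x > 0" and Wp: "W x y > 0" using False W0 by auto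
  note o = out_pos[OF assms Pp Wp]
  let ?q = "out_dist P W y"
  have "ln (W x y / ?q) \<le> W x y / ?q" using ln_le_minus_one[of "W x y / ?q"] o Wp by simp
  hence "P x * W x y * ln (W x y / ?q) \<le> P x * W x y * (W x y / ?q)"
    using P0 W0 by (intro mult_left_mono) auto
  hence "P x * W x y * info_dens P W x y \<le> P x * W x y * (W x y / ?q)"
    using False by (simp add: info_dens_def)
  also have "\<dots> = W x y * (P x * W x y / ?q)" by simp
  also have "\<dots> \<le> W x y * 1"
    using o W0 by (intro mult_left_mono) auto
  finally show ?thesis using W1 by simp
qed

lemma mi_le_cap:
  assumes "is_channel W" "is_pd P"
  shows "mutual_info P W \<le> capacity W"
proof -
  have b: "mutual_info P' W \<le> real (card (UNIV::'a set)) * real (card (UNIV::'b set))" if "is_pd P'"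
    for P' :: "'a::finite \<Rightarrow> real"
  proof -
    have "mutual_info P' W \<le> (\<Sum>x\<in>(UNIV::'a set). \<Sum>y\<in>(UNIV::'b set). 1)"
      unfolding mutual_info_def by (intro sum_mono mi_term_le[OF assms(1) that])
    thus ?thesis by simp
  qed
  show ?thesis unfolding capacity_def
    by (rule cSup_upper) (use assms(2) b in \<open>auto intro!: bdd_aboveI\<close>)
qed

lemma core:
  fixes W :: "'x::finite \<Rightarrow> 'y::finite \<Rightarrow> real" and f :: "nat \<Rightarrow> 'x list"
    and \<phi> :: "'y list \<Rightarrow> nat" and Q :: "'x \<Rightarrow> real" and M :: nat
  assumes ch: "is_channel W" and N1: "N \<ge> 1" and M1: "M \<ge> 1"
    and code: "\<forall>m\<in>{1..M}. length (f m) = N \<and> composition N (f m) = Q"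
    and dec: "\<forall>ys. length ys = N \<longrightarrow> \<phi> ys \<in> {1..M}"
    and c: "c > 0" and t: "t > 0"
    and L0: "ln (real M) + ln c \<ge> real N * capacity W + t"
    and B: "real N * disp Q W / t^2 < \<beta>"
  shows "(1 / real M) * (\<Sum>m\<in>{1..M}. \<Sum>ys\<in>{ys. length ys = N \<and> \<phi> ys \<noteq> m}. chan_N W N (f m) ys)
          > 1 - c - \<beta>"
proof -
  define Y where "Y = {ys::'y list. length ys = N}"
  have finY: "finite Y" unfolding Y_def by (rule fin_lists)
  have Wsum: "\<And>x. (\<Sum>y\<in>UNIV. W x y) = 1" and W0: "\<And>x y. W x y \<ge> 0"
    using ch unfolding is_channel_def is_pd_def by auto
  have card_eq: "real (card {i. i < N \<and> f m ! i = x}) = real N * Q x" if "m \<in> {1..M}" for m x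
  proof -
    have "Q x = real (card {i. i < N \<and> f m ! i = x}) / real N"
      using code that by (metis composition_def)
    thus ?thesis using N1 by simp
  qed
  have comp_sum: "(\<Sum>i<N. g (f m ! i)) = real N * (\<Sum>x\<in>UNIV. Q x * g x)" if "m \<in> {1..M}" for m
    and g :: "'x \<Rightarrow> real"
    unfolding sum_fibers_list card_eq[OF that] by (simp add: sum_distrib_left mult.assoc)
  have m1: "1 \<in> {1..M}" using M1 by simp
  have Q0: "\<And>x. Q x \<ge> 0" using code m1 by (auto simp: composition_def)
  have "real N * (\<Sum>x\<in>UNIV. Q x * 1) = real N * 1"
    using comp_sum[OF m1, of "\<lambda>_. 1"] by simp
  hence Qs: "(\<Sum>x\<in>UNIV. Q x) = 1" using N1 by simp
  have Qpd: "is_pd Q" using Q0 Qs by (simp add: is_pd_def)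
  have L: "ln (real M) + ln c \<ge> real N * mutual_info Q W + t"
    using L0 mult_left_mono[OF mi_le_cap[OF ch Qpd], of "real N"] by simp
  have Qpos: "Q (f m ! i) > 0" if "m \<in> {1..M}" "i < N" for m i
  proof -
    have "i \<in> {j. j < N \<and> f m ! j = f m ! i}" using that by simp
    hence "card {j. j < N \<and> f m ! j = f m ! i} \<noteq> 0" by (auto simp: card_eq_0_iff)
    hence "real N * Q (f m ! i) > 0" using card_eq[OF that(1)] by (metis of_nat_0_less_iff not_gr0)
    thus ?thesis using N1 by (simp add: zero_less_mult_iff)
  qed
  define z where "z x y = info_dens Q W x y - cond_div Q W x" for x y
  define P where "P m ys = chan_N W N (f m) ys" for m ys
  define F where "F m ys = (\<Sum>i<N. z (f m ! i) (ys ! i))" for m ys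
  define S where "S m ys = (\<Sum>i<N. info_dens Q W (f m ! i) (ys ! i))" for m ys
  define q where "q ys = (\<Prod>i<N. out_dist Q W (ys ! i))" for ys
  have P0: "P m ys \<ge> 0" for m ys unfolding P_def chan_N_def by (simp add: W0 prod_nonneg)
  have q0: "q ys \<ge> 0" for ys unfolding q_def out_dist_def
    by (intro prod_nonneg sum_nonneg) (simp add: Q0 W0)
  have Psum: "(\<Sum>ys\<in>Y. P m ys) = 1" if "m \<in> {1..M}" for m
  proof -
    have "length (f m) = N" using code that by auto
    thus ?thesis unfolding Y_def P_def by (rule chan_sum1[where W=W, OF Wsum])
  qed
  have osum: "(\<Sum>y\<in>UNIV. out_dist Q W y) = 1"
    unfolding out_dist_def using Qs
    by (subst sum.swap) (simp add: sum_distrib_left[symmetric] Wsum)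
  have qsum: "(\<Sum>ys\<in>Y. q ys) = 1"
    using chan_sum1[of "\<lambda>_ y. out_dist Q W y" "f 1" N, OF osum] code m1
    unfolding Y_def q_def chan_N_def by auto
  have zmean: "(\<Sum>y\<in>UNIV. W x y * z x y) = 0" for x
    unfolding z_def by (simp add: right_diff_distrib sum_subtractf cond_div_def sum_distrib_right[symmetric] Wsum)
  have mi: "mutual_info Q W = (\<Sum>x\<in>UNIV. Q x * cond_div Q W x)"
    unfolding mutual_info_def cond_div_def by (simp add: sum_distrib_left mult.assoc)
  have SF: "S m ys = F m ys + real N * mutual_info Q W" if "m \<in> {1..M}" for m ys
  proof -
    have "S m ys = F m ys + (\<Sum>i<N. cond_div Q W (f m ! i))"
      unfolding S_def F_def z_def by (simp add: sum_subtractf)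
    thus ?thesis using comp_sum[OF that, of "cond_div Q W"] mi by simp
  qed
  have var: "(\<Sum>ys\<in>Y. P m ys * (F m ys)^2) = real N * disp Q W" if "m \<in> {1..M}" for m
  proof -
    have "(\<Sum>ys\<in>Y. P m ys * (F m ys)^2) = (\<Sum>i<N. \<Sum>y\<in>UNIV. W (f m ! i) y * (z (f m ! i) y)^2)"
      unfolding Y_def P_def F_def using chan_var[where W=W and h=z, OF Wsum zmean, of "f m" N] code that by auto
    also have "\<dots> = real N * (\<Sum>x\<in>UNIV. Q x * (\<Sum>y\<in>UNIV. W x y * (z x y)^2))"
      by (rule comp_sum[OF that])
    also have "\<dots> = real N * disp Q W"
      unfolding disp_def z_def by (simp add: sum_distrib_left mult.assoc)
    finally show ?thesis .
  qed
  define Bv where "Bv = real N * disp Q W / t^2"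
  have cheb: "(\<Sum>ys\<in>Y. if F m ys > t then P m ys else 0) \<le> Bv" if "m \<in> {1..M}" for m
  proof -
    have "(\<Sum>ys\<in>Y. if F m ys > t then P m ys else 0) \<le> (\<Sum>ys\<in>Y. P m ys * (F m ys)^2 / t^2)"
    proof (rule sum_mono)
      fix ys
      show "(if F m ys > t then P m ys else 0) \<le> P m ys * (F m ys)^2 / t^2"
      proof (cases "F m ys > t")
        case True
        hence "t^2 \<le> (F m ys)^2" using t by (intro power_mono) auto
        hence "1 \<le> (F m ys)^2 / t^2" using t by simp
        hence "P m ys * 1 \<le> P m ys * ((F m ys)^2 / t^2)" using P0 by (intro mult_left_mono) auto
        thus ?thesis using True by simp
      qed (simp add: P0)
    qed
    also have "\<dots> = Bv" unfolding Bv_def using var[OF that] by (simp add: sum_divide_distrib[symmetric])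
    finally show ?thesis .
  qed
  have ptw: "P m ys \<le> real M * c * q ys" if "m \<in> {1..M}" "ys \<in> Y" "S m ys \<le> ln (real M) + ln c" for m ys
  proof (cases "\<exists>i<N. W (f m ! i) (ys ! i) = 0")
    case True
    hence "P m ys = 0" unfolding P_def chan_N_def using True by (intro prod_zero) auto
    thus ?thesis using q0[of ys] c M1 by simp
  next
    case False
    have each: "W (f m ! i) (ys ! i) = out_dist Q W (ys ! i) * exp (info_dens Q W (f m ! i) (ys ! i))"
      if "i < N" for i
    proof -
      have Wp: "W (f m ! i) (ys ! i) > 0" using False that W0 by (metis le_less)
      have op: "out_dist Q W (ys ! i) > 0" using out_pos(2)[OF ch Qpd Qpos[OF \<open>m \<in> _\<close> that] Wp] .
      show ?thesis using Wp op by (simp add: info_dens_def)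
    qed
    have "P m ys = q ys * exp (S m ys)"
      unfolding P_def chan_N_def q_def S_def exp_sum[OF finite_lessThan] prod.distrib[symmetric]
      using each by (intro prod.cong) auto
    also have "\<dots> \<le> q ys * exp (ln (real M) + ln c)"
      using that(3) q0 by (intro mult_left_mono) auto
    also have "\<dots> = real M * c * q ys" using M1 c by (simp add: exp_add)
    finally show ?thesis .
  qed
  have corr: "(\<Sum>ys\<in>Y. if \<phi> ys = m then P m ys else 0) \<le> Bv + real M * c * (\<Sum>ys\<in>Y. if \<phi> ys = m then q ys else 0)"
    if m: "m \<in> {1..M}" for m
  proof -
    have "(\<Sum>ys\<in>Y. if \<phi> ys = m then P m ys else 0)
        \<le> (\<Sum>ys\<in>Y. (if F m ys > t then P m ys else 0) + real M * c * (if \<phi> ys = m then q ys else 0))"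
    proof (rule sum_mono)
      fix ys assume ys: "ys \<in> Y"
      have Mc: "real M * c * q ys \<ge> 0" using M1 c q0[of ys] by simp
      show "(if \<phi> ys = m then P m ys else 0) \<le> (if F m ys > t then P m ys else 0) + real M * c * (if \<phi> ys = m then q ys else 0)"
      proof (cases "F m ys > t")
        case True thus ?thesis using Mc P0[of m ys] by auto
      next
        case False
        hence "S m ys \<le> ln (real M) + ln c" using SF[OF m, of ys] L by simp
        thus ?thesis using ptw[OF m ys] False P0[of m ys] by auto
      qed
    qed
    also have "\<dots> \<le> Bv + real M * c * (\<Sum>ys\<in>Y. if \<phi> ys = m then q ys else 0)"
      using cheb[OF m] by (simp add: sum.distrib sum_distrib_left)
    finally show ?thesis .
  qed
  have qtot: "(\<Sum>m\<in>{1..M}. \<Sum>ys\<in>Y. if \<phi> ys = m then q ys else 0) = 1"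
  proof -
    have "(\<Sum>m\<in>{1..M}. \<Sum>ys\<in>Y. if \<phi> ys = m then q ys else 0) = (\<Sum>ys\<in>Y. \<Sum>m\<in>{1..M}. if \<phi> ys = m then q ys else 0)"
      by (rule sum.swap)
    also have "\<dots> = (\<Sum>ys\<in>Y. q ys)"
    proof (rule sum.cong[OF refl])
      fix ys assume "ys \<in> Y"
      hence "\<phi> ys \<in> {1..M}" using dec by (simp add: Y_def)
      thus "(\<Sum>m\<in>{1..M}. if \<phi> ys = m then q ys else 0) = q ys" by (simp add: sum.delta')
    qed
    finally show ?thesis using qsum by simp
  qed
  have err: "(\<Sum>ys\<in>{ys. length ys = N \<and> \<phi> ys \<noteq> m}. chan_N W N (f m) ys) = 1 - (\<Sum>ys\<in>Y. if \<phi> ys = m then P m ys else 0)"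
    if m: "m \<in> {1..M}" for m
  proof -
    have e: "{ys. length ys = N \<and> \<phi> ys \<noteq> m} = {ys\<in>Y. \<phi> ys \<noteq> m}" by (auto simp: Y_def)
    have "(\<Sum>ys\<in>Y. if \<phi> ys \<noteq> m then P m ys else 0) + (\<Sum>ys\<in>Y. if \<phi> ys = m then P m ys else 0) = (\<Sum>ys\<in>Y. P m ys)"
      by (subst sum.distrib[symmetric]) (rule sum.cong, auto)
    thus ?thesis unfolding e sum.inter_filter[OF finY] using Psum[OF m] unfolding P_def by linarith
  qed
  have "(\<Sum>m\<in>{1..M}. \<Sum>ys\<in>{ys. length ys = N \<and> \<phi> ys \<noteq> m}. chan_N W N (f m) ys)
       = (\<Sum>m\<in>{1..M}. 1 - (\<Sum>ys\<in>Y. if \<phi> ys = m then P m ys else 0))"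
    using err by (rule sum.cong[OF refl])
  also have "\<dots> \<ge> (\<Sum>m\<in>{1..M}. 1 - (Bv + real M * c * (\<Sum>ys\<in>Y. if \<phi> ys = m then q ys else 0)))"
    using corr by (intro sum_mono) (simp add: algebra_simps)
  also have "(\<Sum>m\<in>{1..M}. 1 - (Bv + real M * c * (\<Sum>ys\<in>Y. if \<phi> ys = m then q ys else 0)))
      = real M - real M * Bv - real M * c * (\<Sum>m\<in>{1..M}. \<Sum>ys\<in>Y. if \<phi> ys = m then q ys else 0)"
    by (simp add: sum_subtractf sum.distrib sum_distrib_left)
  also have "\<dots> = real M - real M * Bv - real M * c" using qtot by simp
  finally have "(\<Sum>m\<in>{1..M}. \<Sum>ys\<in>{ys. length ys = N \<and> \<phi> ys \<noteq> m}. chan_N W N (f m) ys)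
     \<ge> real M - real M * Bv - real M * c" .
  moreover have "real M * Bv < real M * \<beta>"
    using B M1 unfolding Bv_def by (intro mult_strict_left_mono) auto
  hence "real M - real M * Bv - real M * c > real M * (1 - c - \<beta>)"
    by (simp add: algebra_simps)
  ultimately have "(\<Sum>m\<in>{1..M}. \<Sum>ys\<in>{ys. length ys = N \<and> \<phi> ys \<noteq> m}. chan_N W N (f m) ys) > real M * (1 - c - \<beta>)"
    by linarith
  hence "(1 / real M) * (\<Sum>m\<in>{1..M}. \<Sum>ys\<in>{ys. length ys = N \<and> \<phi> ys \<noteq> m}. chan_N W N (f m) ys)
     > (1 / real M) * (real M * (1 - c - \<beta>))"
    using M1 by (intro mult_strict_left_mono) auto
  thus ?thesis using M1 by simp
qed

theorem lemma13:
  fixes W :: "'x::finite \<Rightarrow> 'y::finite \<Rightarrow> real"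
    and \<epsilon> a :: real and N :: nat
    and f :: "nat \<Rightarrow> 'x list" and \<phi> :: "'y list \<Rightarrow> nat" and Q :: "'x \<Rightarrow> real"
  assumes "is_channel W"
    and "1/2 < \<epsilon>" and "\<epsilon> < 1"
    and "V_eps W > 0"
    and "a > 0" and "a > 2 / (1 - \<epsilon>)"
    and "N \<ge> 1"
    and "cc_code N (capacity W + sqrt (V_eps W / real N) * Phi_inv \<epsilon>
                     - (1 / real N) * ln (1 - \<epsilon> - 2 / a)) f \<phi> Q"
    and "disp Q W < (1 / a) * V_eps W * (Phi_inv \<epsilon>)^2"
  shows "avg_err W N (capacity W + sqrt (V_eps W / real N) * Phi_inv \<epsilon>
                     - (1 / real N) * ln (1 - \<epsilon> - 2 / a)) f \<phi> > \<epsilon>"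
proof -
  define V where "V = V_eps W"
  define p where "p = Phi_inv \<epsilon>"
  define c where "c = 1 - \<epsilon> - 2 / a"
  define C where "C = capacity W"
  define R where "R = C + sqrt (V / real N) * p - (1 / real N) * ln c"
  define M where "M = num_msgs N R"
  define t where "t = sqrt (real N * V) * p"
  have V0: "V > 0" using assms(4) by (simp add: V_def)
  have p0: "p > 0" unfolding p_def using Phi_inv_pos(2) assms(2,3) by blast
  have N0: "real N > 0" using assms(7) by simp
  have e1: "1 - \<epsilon> > 0" using assms(3) by simp
  have "2 < a * (1 - \<epsilon>)" using assms(6) e1 by (simp add: divide_less_eq)
  hence "2 / a < 1 - \<epsilon>" using assms(5) by (simp add: divide_less_eq mult.commute)
  hence c0: "c > 0" unfolding c_def by simp
  define x where "x = exp (real N * R)"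
  have x0: "x > 0" unfolding x_def by simp
  have xc: "x \<le> of_int \<lceil>x\<rceil>" by (rule le_of_int_ceiling)
  hence "(0::real) < of_int \<lceil>x\<rceil>" using x0 by linarith
  hence cp: "\<lceil>x\<rceil> > 0" by simp
  have Mx: "real M = of_int \<lceil>x\<rceil>" unfolding M_def num_msgs_def x_def[symmetric]
    using cp by simp
  have expR: "x \<le> real M" using xc Mx by simp
  have Mpos: "real M > 0" using expR x0 by linarith
  hence M1: "M \<ge> 1" by simp
  have "ln x \<le> ln (real M)" using expR x0 Mpos by simp
  hence lnM: "ln (real M) \<ge> real N * R" unfolding x_def by simp
  have sq: "real N * sqrt (V / real N) = sqrt (real N * V)"
  proof -
    have "real N * sqrt (V / real N) = sqrt ((real N)^2) * sqrt (V / real N)" using N0 by simp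
    also have "\<dots> = sqrt ((real N)^2 * (V / real N))" by (rule real_sqrt_mult[symmetric])
    also have "(real N)^2 * (V / real N) = real N * V" using N0 by (simp add: power2_eq_square)
    finally show ?thesis .
  qed
  have NR: "real N * R = real N * C + t - ln c"
    unfolding R_def t_def using N0 sq by (simp add: algebra_simps)
  have L: "ln (real M) + ln c \<ge> real N * capacity W + t"
    using lnM NR by (simp add: C_def)
  have t0: "t > 0" unfolding t_def using N0 V0 p0 by simp
  have t2: "t^2 = real N * V * p^2" unfolding t_def using N0 V0 by (simp add: power_mult_distrib)
  have "disp Q W < (1 / a) * V * p^2" using assms(9) by (simp add: V_def p_def)
  hence "disp Q W / (V * p^2) < 1 / a" using V0 p0 by (simp add: pos_divide_less_eq)
  hence B: "real N * disp Q W / t^2 < 1 / a" unfolding t2 using N0 by simp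
  have cc: "cc_code N R f \<phi> Q" using assms(8) by (simp add: R_def C_def V_def p_def c_def)
  have code: "\<forall>m\<in>{1..M}. length (f m) = N \<and> composition N (f m) = Q"
    and dec: "\<forall>ys. length ys = N \<longrightarrow> \<phi> ys \<in> {1..M}"
    using cc unfolding cc_code_def M_def by auto
  have "avg_err W N R f \<phi> > 1 - c - 1 / a"
    unfolding avg_err_def M_def[symmetric]
    using core[OF assms(1) assms(7) M1 code dec c0 t0 L B] .
  moreover have "1 - c - 1 / a > \<epsilon>" unfolding c_def using assms(5) by simp
  ultimately have "avg_err W N R f \<phi> > \<epsilon>" by linarith
  thus ?thesis by (simp add: R_def C_def V_def p_def c_def)
qed

end
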